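(* Let $\mathcal{H}$ be a hedgehog with support function $h(s)=a_0+\sum_{n\geqslant1}(a_n\cos(ns)+b_n\sin(ns))$ and average width $\overline{w}$, and let $k>2$ be an integer. Then the $k$th Order Preserving Set $\mathcal{P}_k$ of $\mathcal{H}$ is a hedgehog with support function \[ h_k(s)=\frac1k\sum_{j=0}^{k-1}h\Big(s+\frac{2\pi j}{k}\Big)-\frac12\overline{w}, \] i.e. $\mathcal{P}_k(s)=h_k(s)u(s)+h_k'(s)u'(s)$ for all $s$, and \[ h_k(s)=\sum_{k\mid n,\ n>1}\big(a_n\cos(ns)+b_n\sin(ns)\big). \]
   Context: Write $u(s)=(\cos s,\sin s)$ and $u'(s)=(-\sin s,\cos s)$. A hedgehog is a closed planar curve determined by a smooth $2\pi$-periodic function $h$ (its support function; equivalently, the difference of support functions of two convex bodies) via $\mathcal{H}(s)=h(s)u(s)+h'(s)u'(s)$, $s\in[0,2\pi]$. Its average width is $\overline{w}=\frac1\pi\int_0^{2\pi}h(s)\,ds$. For $(x,y)\in\mathbb{R}^2$ let $(x,y)^\perp=(-y,x)$ and set $\mathcal{H}^\perp(s)=\mathcal{H}(s)^\perp$. The $k$th Order Preserving Set of $\mathcal{H}$ is the curve $\mathcal{P}_k(s)=\frac{1}{k}\sum_{j=1}^{k}\Big(\cos\big(\tfrac{2\pi j}{k}\big)\,\mathcal{H}\big(s+\tfrac{2\pi j}{k}\big)-\sin\big(\tfrac{2\pi j}{k}\big)\,\mathcal{H}^{\perp}\big(s+\tfrac{2\pi j}{k}\big)\Big)-\frac{1}{2}\overline{w}\,u(s)$,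 $s\in[0,2\pi]$. (The points $\mathcal{H}(s+2\pi j/k)$, $j=1,\dots,k$, form an isogonal family: their normals are spaced by angles $2\pi/k$.) *)

theory Defs
  imports "HOL-Analysis.Analysis"
begin

definition uvec :: "real \<Rightarrow> real \<times> real" where
  "uvec s = (cos s, sin s)"

definition uvec' :: "real \<Rightarrow> real \<times> real" where
  "uvec' s = (- sin s, cos s)"

definition perp :: "real \<times> real \<Rightarrow> real \<times> real" where
  "perp p = (- snd p, fst p)"

definition smooth_fun :: "(real \<Rightarrow> real) \<Rightarrow> bool" where
  "smooth_fun h \<longleftrightarrow> (\<forall>n x. ((deriv ^^ n) h) differentiable (at x))"

definition periodic_2pi :: "(real \<Rightarrow> real) \<Rightarrow> bool" where
  "periodic_2pi h \<longleftrightarrow> (\<forall>s. h (s + 2 * pi) = h s)"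

definition hedgehog :: "(real \<Rightarrow> real) \<Rightarrow> real \<Rightarrow> real \<times> real" where
  "hedgehog h s = h s *\<^sub>R uvec s + deriv h s *\<^sub>R uvec' s"

definition avg_width :: "(real \<Rightarrow> real) \<Rightarrow> real" where
  "avg_width h = (1 / pi) * integral {0..2 * pi} h"

definition ops :: "(real \<Rightarrow> real) \<Rightarrow> nat \<Rightarrow> real \<Rightarrow> real \<times> real" where
  "ops h k s =
     (1 / real k) *\<^sub>R (\<Sum>j = 1..k.
        cos (2 * pi * real j / real k) *\<^sub>R hedgehog h (s + 2 * pi * real j / real k)
      - sin (2 * pi * real j / real k) *\<^sub>R perp (hedgehog h (s + 2 * pi * real j / real k)))
     - (1 / 2 * avg_width h) *\<^sub>R uvec s"

text \<open>Fourier coefficients: h(s) = a_0 + sum_{n>=1} (a_n cos(ns) + b_n sin(ns)).\<close>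
definition fourier_a :: "(real \<Rightarrow> real) \<Rightarrow> nat \<Rightarrow> real" where
  "fourier_a h n =
     (if n = 0 then (1 / (2 * pi)) * integral {0..2 * pi} h
      else (1 / pi) * integral {0..2 * pi} (\<lambda>s. h s * cos (real n * s)))"

definition fourier_b :: "(real \<Rightarrow> real) \<Rightarrow> nat \<Rightarrow> real" where
  "fourier_b h n = (1 / pi) * integral {0..2 * pi} (\<lambda>s. h s * sin (real n * s))"

end

theory Submission
  imports Defs
begin
lemma ftc_real:
  fixes f f' :: "real \<Rightarrow> real"
  assumes "\<And>x. (f has_real_derivative f' x) (at x)" "a \<le> b"
  shows "(f' has_integral (f b - f a)) {a..b}"
  apply (rule fundamental_theorem_of_calculus[OF assms(2)])
  using assms(1) has_real_derivative_iff_has_vector_derivative has_field_derivative_at_within by blast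

lemma sin_int_2pi: "sin (of_int j * (2*pi)) = 0"
  using sin_integer_2pi[of "of_int j"] by (simp add: mult.commute)
lemma cos_int_2pi: "cos (of_int j * (2*pi)) = 1"
  using cos_integer_2pi[of "of_int j"] by (simp add: mult.commute)

lemma int_cos: "((\<lambda>t. cos (of_int j * t)) has_integral (if j = 0 then 2*pi else 0)) {0..2*pi}"
proof (cases "j = 0")
  case True
  then show ?thesis using has_integral_const_real[of "1::real" 0 "2*pi"] by simp
next
  case False
  have "((\<lambda>t. cos (of_int j * t)) has_integral (sin (of_int j * (2*pi)) / of_int j - sin (of_int j * 0) / of_int j)) {0..2*pi}"
    apply (rule ftc_real)
    using False by (auto intro!: derivative_eq_intros)
  then show ?thesis using False by (simp add: sin_int_2pi)
qed

lemma int_sin: "((\<lambda>t. sin (of_int j * t)) has_integral 0) {0..2*pi}"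
proof (cases "j = 0")
  case True
  then show ?thesis by simp
next
  case False
  have "((\<lambda>t. sin (of_int j * t)) has_integral ((- cos (of_int j * (2*pi)) / of_int j) - (- cos (of_int j * 0) / of_int j))) {0..2*pi}"
    apply (rule ftc_real)
    using False by (auto intro!: derivative_eq_intros)
  then show ?thesis using False by (simp add: cos_int_2pi)
qed

lemma orth_cc: "((\<lambda>t. cos (real n * t) * cos (real m * t)) has_integral
   (if n = m then (if n = 0 then 2*pi else pi) else 0)) {0..2*pi}"
proof -
  have e: "\<And>t. cos (real n * t) * cos (real m * t) =
     (cos (of_int (int n - int m) * t) + cos (of_int (int n + int m) * t)) / 2"
    by (simp add: left_diff_distrib distrib_right cos_diff cos_add)
  have "((\<lambda>t. (cos (of_int (int n - int m) * t) + cos (of_int (int n + int m) * t)) / 2) has_integral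
     ((if int n - int m = 0 then 2*pi else 0) + (if int n + int m = 0 then 2*pi else 0)) / 2) {0..2*pi}"
    by (intro has_integral_divide has_integral_add int_cos)
  then show ?thesis unfolding e by (rule has_integral_eq_rhs) auto
qed

lemma orth_sc: "((\<lambda>t. sin (real n * t) * cos (real m * t)) has_integral 0) {0..2*pi}"
proof -
  have e: "\<And>t. sin (real n * t) * cos (real m * t) =
     (sin (of_int (int n - int m) * t) + sin (of_int (int n + int m) * t)) / 2"
    by (simp add: left_diff_distrib distrib_right sin_diff sin_add)
  have "((\<lambda>t. (sin (of_int (int n - int m) * t) + sin (of_int (int n + int m) * t)) / 2) has_integral
     (0 + 0) / 2) {0..2*pi}"
    by (intro has_integral_divide has_integral_add int_sin)
  then show ?thesis unfolding e by simp
qed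

lemma orth_ss: "((\<lambda>t. sin (real n * t) * sin (real m * t)) has_integral
   (if n = m \<and> n \<noteq> 0 then pi else 0)) {0..2*pi}"
proof -
  have e: "\<And>t. sin (real n * t) * sin (real m * t) =
     (cos (of_int (int n - int m) * t) - cos (of_int (int n + int m) * t)) / 2"
    by (simp add: left_diff_distrib distrib_right cos_diff cos_add)
  have "((\<lambda>t. (cos (of_int (int n - int m) * t) - cos (of_int (int n + int m) * t)) / 2) has_integral
     ((if int n - int m = 0 then 2*pi else 0) - (if int n + int m = 0 then 2*pi else 0)) / 2) {0..2*pi}"
    by (intro has_integral_divide has_integral_diff int_cos)
  then show ?thesis unfolding e by (rule has_integral_eq_rhs) auto
qed

lemma intg_cont: "continuous_on UNIV (f::real\<Rightarrow>real) \<Longrightarrow> f integrable_on {a..b}"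
  by (rule integrable_continuous_interval) (rule continuous_on_subset, auto)

definition Qp :: "(real \<Rightarrow> real) \<Rightarrow> (real \<Rightarrow> real) \<Rightarrow> bool" where
  "Qp g \<phi> \<longleftrightarrow> continuous_on UNIV \<phi> \<and>
     (\<forall>n::int. integral {0..2*pi} (\<lambda>t. g t * \<phi> t * cos (of_int n * t)) = 0
             \<and> integral {0..2*pi} (\<lambda>t. g t * \<phi> t * sin (of_int n * t)) = 0)"

lemma lin_int:
  fixes F G :: "real \<Rightarrow> real"
  assumes "F integrable_on S" "G integrable_on S" "integral S F = 0" "integral S G = 0"
  shows "integral S (\<lambda>t. a * F t + b * G t) = 0"
    "integral S (\<lambda>t. (F t + G t) / 2) = 0"
    "integral S (\<lambda>t. (F t - G t) / 2) = 0"
proof -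
  have f: "(F has_integral 0) S" "(G has_integral 0) S"
    using assms by (metis integrable_integral)+
  show "integral S (\<lambda>t. a * F t + b * G t) = 0"
    using has_integral_add[OF has_integral_mult_right[OF f(1), of a] has_integral_mult_right[OF f(2), of b]]
    by (simp add: integral_unique)
  show "integral S (\<lambda>t. (F t + G t) / 2) = 0"
  proof (rule integral_unique)
    show "((\<lambda>t. (F t + G t) / 2) has_integral 0) S"
      using has_integral_divide[OF has_integral_add[OF f], of 2] by simp
  qed
  show "integral S (\<lambda>t. (F t - G t) / 2) = 0"
  proof (rule integral_unique)
    show "((\<lambda>t. (F t - G t) / 2) has_integral 0) S"
      using has_integral_divide[OF has_integral_diff[OF f], of 2] by simp
  qed
qed

context
  fixes g :: "real \<Rightarrow> real"
  assumes gc: "continuous_on UNIV g"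
begin

lemma Q_lin:
  assumes "Qp g \<phi>" "Qp g \<psi>"
  shows "Qp g (\<lambda>t. a * \<phi> t + b * \<psi> t)"
proof -
  have c1: "continuous_on UNIV \<phi>" "continuous_on UNIV \<psi>" using assms unfolding Qp_def by auto
  show ?thesis unfolding Qp_def
  proof (intro conjI allI)
    show "continuous_on UNIV (\<lambda>t. a * \<phi> t + b * \<psi> t)" using c1 by (intro continuous_intros)
  next
    fix n :: int
    have i1: "(\<lambda>t. g t * \<phi> t * cos (of_int n * t)) integrable_on {0..2*pi}"
             "(\<lambda>t. g t * \<psi> t * cos (of_int n * t)) integrable_on {0..2*pi}"
             "(\<lambda>t. g t * \<phi> t * sin (of_int n * t)) integrable_on {0..2*pi}"
             "(\<lambda>t. g t * \<psi> t * sin (of_int n * t)) integrable_on {0..2*pi}"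
      using c1 gc by (auto intro!: intg_cont continuous_intros)
    have e1: "(\<lambda>t. g t * (a * \<phi> t + b * \<psi> t) * cos (of_int n * t)) =
       (\<lambda>t. a * (g t * \<phi> t * cos (of_int n * t)) + b * (g t * \<psi> t * cos (of_int n * t)))"
      by (auto simp: algebra_simps)
    have e2: "(\<lambda>t. g t * (a * \<phi> t + b * \<psi> t) * sin (of_int n * t)) =
       (\<lambda>t. a * (g t * \<phi> t * sin (of_int n * t)) + b * (g t * \<psi> t * sin (of_int n * t)))"
      by (auto simp: algebra_simps)
    show "integral {0..2*pi} (\<lambda>t. g t * (a * \<phi> t + b * \<psi> t) * cos (of_int n * t)) = 0"
      unfolding e1 apply (rule lin_int(1)[OF i1(1,2)]) using assms unfolding Qp_def by blast+
    show "integral {0..2*pi} (\<lambda>t. g t * (a * \<phi> t + b * \<psi> t) * sin (of_int n * t)) = 0"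
      unfolding e2 apply (rule lin_int(1)[OF i1(3,4)]) using assms unfolding Qp_def by blast+
  qed
qed

lemma Q_cos:
  assumes "Qp g \<phi>"
  shows "Qp g (\<lambda>t. \<phi> t * cos t)"
proof -
  have c1: "continuous_on UNIV \<phi>" using assms unfolding Qp_def by auto
  show ?thesis unfolding Qp_def
  proof (intro conjI allI)
    show "continuous_on UNIV (\<lambda>t. \<phi> t * cos t)" using c1 by (intro continuous_intros)
  next
    fix n :: int
    have i1: "\<And>m. (\<lambda>t. g t * \<phi> t * cos (of_int m * t)) integrable_on {0..2*pi}"
             "\<And>m. (\<lambda>t. g t * \<phi> t * sin (of_int m * t)) integrable_on {0..2*pi}"
      using c1 gc by (auto intro!: intg_cont continuous_intros)
    have e1: "(\<lambda>t. g t * (\<phi> t * cos t) * cos (of_int n * t)) =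
       (\<lambda>t. (g t * \<phi> t * cos (of_int (n+1) * t) + g t * \<phi> t * cos (of_int (n-1) * t)) / 2)"
      by (auto simp: algebra_simps cos_add cos_diff)
    have e2: "(\<lambda>t. g t * (\<phi> t * cos t) * sin (of_int n * t)) =
       (\<lambda>t. (g t * \<phi> t * sin (of_int (n+1) * t) + g t * \<phi> t * sin (of_int (n-1) * t)) / 2)"
      by (auto simp: algebra_simps sin_add sin_diff)
    show "integral {0..2*pi} (\<lambda>t. g t * (\<phi> t * cos t) * cos (of_int n * t)) = 0"
      unfolding e1 apply (rule lin_int(2)[OF i1(1) i1(1)]) using assms unfolding Qp_def by blast+
    show "integral {0..2*pi} (\<lambda>t. g t * (\<phi> t * cos t) * sin (of_int n * t)) = 0"
      unfolding e2 apply (rule lin_int(2)[OF i1(2) i1(2)]) using assms unfolding Qp_def by blast+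
  qed
qed

lemma Q_sin:
  assumes "Qp g \<phi>"
  shows "Qp g (\<lambda>t. \<phi> t * sin t)"
proof -
  have c1: "continuous_on UNIV \<phi>" using assms unfolding Qp_def by auto
  show ?thesis unfolding Qp_def
  proof (intro conjI allI)
    show "continuous_on UNIV (\<lambda>t. \<phi> t * sin t)" using c1 by (intro continuous_intros)
  next
    fix n :: int
    have i1: "\<And>m. (\<lambda>t. g t * \<phi> t * cos (of_int m * t)) integrable_on {0..2*pi}"
             "\<And>m. (\<lambda>t. g t * \<phi> t * sin (of_int m * t)) integrable_on {0..2*pi}"
      using c1 gc by (auto intro!: intg_cont continuous_intros)
    have e1: "(\<lambda>t. g t * (\<phi> t * sin t) * cos (of_int n * t)) =
       (\<lambda>t. (g t * \<phi> t * sin (of_int (n+1) * t) - g t * \<phi> t * sin (of_int (n-1) * t)) / 2)"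
      by (auto simp: algebra_simps sin_add sin_diff)
    have e2: "(\<lambda>t. g t * (\<phi> t * sin t) * sin (of_int n * t)) =
       (\<lambda>t. (g t * \<phi> t * cos (of_int (n-1) * t) - g t * \<phi> t * cos (of_int (n+1) * t)) / 2)"
      by (auto simp: algebra_simps cos_add cos_diff)
    show "integral {0..2*pi} (\<lambda>t. g t * (\<phi> t * sin t) * cos (of_int n * t)) = 0"
      unfolding e1 apply (rule lin_int(3)[OF i1(2) i1(2)]) using assms unfolding Qp_def by blast+
    show "integral {0..2*pi} (\<lambda>t. g t * (\<phi> t * sin t) * sin (of_int n * t)) = 0"
      unfolding e2 apply (rule lin_int(3)[OF i1(1) i1(1)]) using assms unfolding Qp_def by blast+
  qed
qed

lemma M_poly:
  fixes p :: "real \<times> real \<Rightarrow> real"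
  assumes "real_polynomial_function p"
  shows "Qp g \<phi> \<Longrightarrow> Qp g (\<lambda>t. \<phi> t * p (cos t, sin t))"
  using assms
proof (induction p arbitrary: \<phi> rule: real_polynomial_function.induct)
  case (linear f)
  have lf: "linear f" using linear.hyps bounded_linear.linear by blast
  have fe: "f (x, y) = x * f (1,0) + y * f (0,1)" for x y
  proof -
    have "(x, y) = x *\<^sub>R (1,0) + y *\<^sub>R (0,1)" by simp
    then have "f (x, y) = f (x *\<^sub>R (1,0)) + f (y *\<^sub>R (0,1))" using lf by (metis linear_add)
    also have "\<dots> = x * f (1,0) + y * f (0,1)" using linear_scale[OF lf, of x "(1,0)"] linear_scale[OF lf, of y "(0,1)"] by simp
    finally show ?thesis .
  qed
  have "Qp g (\<lambda>t. f (1,0) * (\<phi> t * cos t) + f (0,1) * (\<phi> t * sin t))"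
    by (intro Q_lin Q_cos Q_sin linear.prems)
  moreover have "(\<lambda>t. f (1,0) * (\<phi> t * cos t) + f (0,1) * (\<phi> t * sin t)) = (\<lambda>t. \<phi> t * f (cos t, sin t))"
  proof
    fix t show "f (1,0) * (\<phi> t * cos t) + f (0,1) * (\<phi> t * sin t) = \<phi> t * f (cos t, sin t)"
      unfolding fe[of "cos t" "sin t"] by (simp add: algebra_simps)
  qed
  ultimately show ?case by simp
next
  case (const c)
  have "Qp g (\<lambda>t. c * \<phi> t + 0 * \<phi> t)" by (intro Q_lin const.prems)
  then show ?case by (simp add: mult.commute)
next
  case (add f1 f2)
  have "Qp g (\<lambda>t. 1 * (\<phi> t * f1 (cos t, sin t)) + 1 * (\<phi> t * f2 (cos t, sin t)))"
    by (intro Q_lin add.IH add.prems)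
  then show ?case by (simp add: algebra_simps)
next
  case (mult f1 f2)
  have "Qp g (\<lambda>t. (\<phi> t * f1 (cos t, sin t)) * f2 (cos t, sin t))"
    by (intro mult.IH mult.prems)
  then show ?case by (simp add: algebra_simps)
qed

end

lemma unique_fourier:
  fixes g :: "real \<Rightarrow> real"
  assumes gc: "continuous_on UNIV g" and gp: "g (2*pi) = g 0"
    and cz: "\<And>n::nat. integral {0..2*pi} (\<lambda>t. g t * cos (real n * t)) = 0"
    and sz: "\<And>n::nat. integral {0..2*pi} (\<lambda>t. g t * sin (real n * t)) = 0"
    and t: "t \<in> {0..2*pi}"
  shows "g t = 0"
proof -
  have Q1: "Qp g (\<lambda>t. 1)"
    unfolding Qp_def
  proof (rule conjI[OF continuous_on_const], rule allI)
    fix n :: int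
    show "integral {0..2*pi} (\<lambda>t. g t * 1 * cos (of_int n * t)) = 0 \<and>
          integral {0..2*pi} (\<lambda>t. g t * 1 * sin (of_int n * t)) = 0"
    proof (cases "n \<ge> 0")
      case True
      then obtain m where "n = int m" using nonneg_eq_int by blast
      then show ?thesis using cz[of m] sz[of m] by simp
    next
      case False
      then obtain m where "n = - int m" by (metis nonpos_int_cases not_le order.strict_iff_not)
      then show ?thesis using cz[of m] sz[of m] by simp
    qed
  qed
  have pz: "integral {0..2*pi} (\<lambda>t. g t * p (cos t, sin t)) = 0" if "polynomial_function p" for p :: "real \<times> real \<Rightarrow> real"
  proof -
    have "Qp g (\<lambda>t. 1 * p (cos t, sin t))"
      by (rule M_poly[OF gc _ Q1]) (use that real_polynomial_function_eq in auto)
    then have "integral {0..2*pi} (\<lambda>t. g t * (1 * p (cos t, sin t)) * cos (of_int 0 * t)) = 0"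
      unfolding Qp_def by blast
    then show ?thesis by simp
  qed
  define F where "F z = (if snd z \<ge> 0 then g (arccos (fst z)) else g (2*pi - arccos (fst z)))" for z :: "real \<times> real"
  define S1 where "S1 = sphere (0::real\<times>real) 1 \<inter> {z. snd z \<ge> 0}"
  define S2 where "S2 = sphere (0::real\<times>real) 1 \<inter> {z. snd z \<le> 0}"
  have fstb: "fst z \<in> {-1..1}" if "z \<in> sphere (0::real\<times>real) 1" for z
  proof -
    have "norm (fst z) \<le> 1" using that norm_fst_le[of "fst z" "snd z"] by simp
    then show ?thesis by auto
  qed
  have ca: "continuous_on A (\<lambda>z. arccos (fst z))" if "A \<subseteq> sphere 0 1" for A :: "(real \<times> real) set"
  proof (rule continuous_on_compose2[OF continuous_on_arccos'])
    show "continuous_on A fst" by (intro continuous_intros)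
    show "fst ` A \<subseteq> {-1..1}" using that fstb by blast
  qed
  have cF: "continuous_on (sphere 0 1) F"
  proof -
    have "continuous_on (S1 \<union> S2) (\<lambda>z. if snd z \<ge> 0 then g (arccos (fst z)) else g (2*pi - arccos (fst z)))"
    proof (rule continuous_on_cases)
      show "closed S1" "closed S2" unfolding S1_def S2_def
        by (auto intro!: closed_Int closed_Collect_le continuous_intros)
      show "continuous_on S1 (\<lambda>z. g (arccos (fst z)))"
        by (rule continuous_on_compose2[OF gc ca]) (auto simp: S1_def)
      show "continuous_on S2 (\<lambda>z. g (2*pi - arccos (fst z)))"
        by (rule continuous_on_compose2[OF gc continuous_on_diff[OF continuous_on_const ca]]) (auto simp: S2_def)
      show "\<forall>z. z \<in> S1 \<and> \<not> 0 \<le> snd z \<or> z \<in> S2 \<and> 0 \<le> snd z \<longrightarrow>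
          g (arccos (fst z)) = g (2 * pi - arccos (fst z))"
      proof (intro allI impI)
        fix z :: "real \<times> real"
        assume "z \<in> S1 \<and> \<not> 0 \<le> snd z \<or> z \<in> S2 \<and> 0 \<le> snd z"
        then have z: "snd z = 0" "norm z = 1" by (auto simp: S1_def S2_def)
        obtain a b where ab: "z = (a, b)" by (cases z)
        have "\<bar>a\<bar> = 1" using z unfolding ab by (simp add: norm_Pair)
        then have "a = 1 \<or> a = -1" by linarith
        then show "g (arccos (fst z)) = g (2 * pi - arccos (fst z))"
          using gp unfolding ab by auto
      qed
    qed
    moreover have "S1 \<union> S2 = sphere 0 1" by (auto simp: S1_def S2_def)
    ultimately show ?thesis unfolding F_def by simp
  qed
  have Fc: "F (cos t, sin t) = g t" if "t \<in> {0..2*pi}" for t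
  proof (cases "sin t \<ge> 0")
    case True
    show ?thesis
    proof (cases "t \<le> pi")
      case True
      then show ?thesis using that \<open>sin t \<ge> 0\<close> by (simp add: F_def arccos_cos)
    next
      case False
      then have "t = 2*pi" using that True sin_lt_zero[of t] by (cases "t < 2*pi") auto
      then show ?thesis using gp by (simp add: F_def)
    qed
  next
    case False
    then have "\<not> t \<le> pi" using that sin_ge_zero[of t] by auto
    then have "t > pi" by simp
    then have "arccos (cos t) = 2*pi - t"
      using that arccos_cos[of "2*pi - t"] by simp
    then show ?thesis using False by (simp add: F_def)
  qed
  have cs: "(cos t, sin t) \<in> sphere (0::real\<times>real) 1" for t
    by (simp add: norm_Pair)
  define X where "X = integral {0..2*pi} (\<lambda>t. g t * g t)"
  define A where "A = integral {0..2*pi} (\<lambda>t. \<bar>g t\<bar>)"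
  have X0: "X \<ge> 0" unfolding X_def by (rule integral_nonneg) (auto intro!: intg_cont continuous_intros gc)
  have XA: "X \<le> e * A" if e: "e > 0" for e
  proof -
    obtain p where p: "polynomial_function p" "\<forall>z\<in>sphere 0 1. norm (F z - p z) < e"
      using Stone_Weierstrass_polynomial_function[OF compact_sphere cF e] by blast
    have cp: "continuous_on UNIV (\<lambda>t. p (cos t, sin t))"
    proof (rule continuous_on_compose2[of UNIV p UNIV "\<lambda>t. (cos t, sin t)"])
      show "continuous_on UNIV p" by (rule continuous_on_polymonial_function[OF p(1)])
      show "continuous_on UNIV (\<lambda>t::real. (cos t, sin t))" by (intro continuous_intros)
    qed simp
    have ap: "\<bar>g t - p (cos t, sin t)\<bar> < e" if "t \<in> {0..2*pi}" for t
    proof -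
      have "norm (F (cos t, sin t) - p (cos t, sin t)) < e" using p(2) cs[of t] by blast
      then show ?thesis using Fc[OF that] by simp
    qed
    have "X = integral {0..2*pi} (\<lambda>t. g t * g t) - integral {0..2*pi} (\<lambda>t. g t * p (cos t, sin t))"
      using pz[OF p(1)] X_def by simp
    also have "\<dots> = integral {0..2*pi} (\<lambda>t. g t * (g t - p (cos t, sin t)))"
    proof -
      have i1: "(\<lambda>t. g t * g t) integrable_on {0..2*pi}" by (intro intg_cont continuous_intros gc)
      have i2: "(\<lambda>t. g t * p (cos t, sin t)) integrable_on {0..2*pi}" by (intro intg_cont continuous_intros gc cp)
      have "(\<lambda>t. g t * (g t - p (cos t, sin t))) = (\<lambda>t. g t * g t - g t * p (cos t, sin t))"
        by (simp add: right_diff_distrib)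
      then show ?thesis using integral_diff[OF i1 i2] by simp
    qed
    also have "\<dots> \<le> integral {0..2*pi} (\<lambda>t. e * \<bar>g t\<bar>)"
    proof (rule integral_le)
      show "(\<lambda>t. g t * (g t - p (cos t, sin t))) integrable_on {0..2*pi}"
        by (intro intg_cont continuous_intros gc cp)
      show "(\<lambda>t. e * \<bar>g t\<bar>) integrable_on {0..2*pi}"
        by (intro intg_cont continuous_intros gc)
      fix t assume "t \<in> {0..2*pi}"
      then have "\<bar>g t - p (cos t, sin t)\<bar> \<le> e" using ap less_imp_le by blast
      then have "\<bar>g t\<bar> * \<bar>g t - p (cos t, sin t)\<bar> \<le> \<bar>g t\<bar> * e" by (simp add: mult_left_mono)
      then show "g t * (g t - p (cos t, sin t)) \<le> e * \<bar>g t\<bar>"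
        using abs_ge_self[of "g t * (g t - p (cos t, sin t))"] unfolding abs_mult by (simp add: mult.commute)
    qed
    also have "\<dots> = e * A" unfolding A_def by simp
    finally show ?thesis .
  qed
  have A0: "A \<ge> 0" unfolding A_def by (rule integral_nonneg) (auto intro!: intg_cont continuous_intros gc)
  have "X \<le> 0"
  proof (rule ccontr)
    assume "\<not> X \<le> 0"
    then have Xp: "X > 0" by simp
    have "X \<le> X / (A + 1) * A" using XA[of "X / (A+1)"] Xp A0 by simp
    also have "\<dots> < X" using Xp A0 by (simp add: field_simps)
    finally show False by simp
  qed
  then have "X = 0" using X0 by simp
  then have "((\<lambda>t. g t * g t) has_integral 0) (cbox 0 (2*pi))"
  proof -
    have "(\<lambda>t. g t * g t) integrable_on {0..2*pi}" by (intro intg_cont continuous_intros gc)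
    then have "((\<lambda>t. g t * g t) has_integral X) {0..2*pi}" unfolding X_def by (rule integrable_integral)
    then show ?thesis using \<open>X = 0\<close> by simp
  qed
  moreover have "continuous_on (cbox 0 (2*pi)) (\<lambda>t. g t * g t)"
    by (intro continuous_intros continuous_on_subset[OF gc]) auto
  moreover have "box 0 (2*pi) \<noteq> ({}::real set)" unfolding box_real greaterThanLessThan_empty_iff using pi_gt_zero by linarith
  moreover have "t \<in> cbox 0 (2*pi)" using t by simp
  ultimately have "g t * g t = 0"
    using has_integral_0_cbox_imp_0[of 0 "2*pi" "\<lambda>t. g t * g t" t] by simp
  then show ?thesis by simp
qed

lemma deriv_periodic:
  fixes f :: "real \<Rightarrow> real"
  assumes d: "\<And>x. f differentiable at x" and p: "\<And>s. f (s + 2*pi) = f s"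
  shows "deriv f (s + 2*pi) = deriv f s"
proof -
  have "(f has_real_derivative deriv f (s+2*pi)) (at (s+2*pi))"
    using d by (simp add: DERIV_deriv_iff_real_differentiable)
  then have "((\<lambda>x. f (x + 2*pi)) has_real_derivative deriv f (s+2*pi)) (at s)"
    by (simp add: DERIV_shift)
  moreover have "(\<lambda>x. f (x + 2*pi)) = f" using p by auto
  ultimately show ?thesis by (metis DERIV_imp_deriv)
qed

lemma coeff_decay:
  fixes f f1 f2 :: "real \<Rightarrow> real"
  assumes d0: "\<And>x. (f has_real_derivative f1 x) (at x)"
    and d1: "\<And>x. (f1 has_real_derivative f2 x) (at x)"
    and c2: "continuous_on UNIV f2"
    and p0: "f (2*pi) = f 0" and p1: "f1 (2*pi) = f1 0"
    and B: "\<And>x. x \<in> {0..2*pi} \<Longrightarrow> \<bar>f2 x\<bar> \<le> B"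
    and n: "n \<ge> 1"
  shows "\<bar>integral {0..2*pi} (\<lambda>t. f t * cos (real n * t))\<bar> \<le> 2*pi*B / (real n)^2"
    "\<bar>integral {0..2*pi} (\<lambda>t. f t * sin (real n * t))\<bar> \<le> 2*pi*B / (real n)^2"
proof -
  define v where "v = real n"
  have v: "v > 0" using n by (simp add: v_def)
  have c0: "continuous_on UNIV f" using d0 by (meson DERIV_isCont continuous_at_imp_continuous_on)
  have s2: "sin (v * (2*pi)) = 0" using sin_int_2pi[of "int n"] by (simp add: v_def)
  have c2p: "cos (v * (2*pi)) = 1" using cos_int_2pi[of "int n"] by (simp add: v_def)
  have iI2c: "\<bar>integral {0..2*pi} (\<lambda>t. f2 t * cos (v * t))\<bar> \<le> B * (2*pi - 0)"
    apply (rule integral_bound[where f="\<lambda>t. f2 t * cos (v * t)", simplified real_norm_def])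
      apply simp
     apply (intro continuous_intros continuous_on_subset[OF c2]; simp)
    unfolding abs_mult by (rule order_trans[OF mult_left_le[OF abs_cos_le_one abs_ge_zero]]) (use B in simp)
  have iI2s: "\<bar>integral {0..2*pi} (\<lambda>t. f2 t * sin (v * t))\<bar> \<le> B * (2*pi - 0)"
    apply (rule integral_bound[where f="\<lambda>t. f2 t * sin (v * t)", simplified real_norm_def])
      apply simp
     apply (intro continuous_intros continuous_on_subset[OF c2]; simp)
    unfolding abs_mult by (rule order_trans[OF mult_left_le[OF abs_sin_le_one abs_ge_zero]]) (use B in simp)
  have i1: "(\<lambda>t. f t * cos (v * t)) integrable_on {0..2*pi}" "(\<lambda>t. f t * sin (v * t)) integrable_on {0..2*pi}"
    "(\<lambda>t. f2 t * cos (v * t) / v^2) integrable_on {0..2*pi}" "(\<lambda>t. f2 t * sin (v * t) / v^2) integrable_on {0..2*pi}"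
    by (intro intg_cont continuous_intros c0 c2; use v in simp)+
  have "((\<lambda>t. f t * cos (v * t) + f2 t * cos (v * t) / v^2) has_integral
     ((f (2*pi) * sin (v * (2*pi)) / v + f1 (2*pi) * cos (v * (2*pi)) / v^2) - (f 0 * sin (v * 0) / v + f1 0 * cos (v * 0) / v^2))) {0..2*pi}"
  proof (rule ftc_real)
    fix x
    show "((\<lambda>t. f t * sin (v * t) / v + f1 t * cos (v * t) / v^2) has_real_derivative
      f x * cos (v * x) + f2 x * cos (v * x) / v^2) (at x)"
      using v by (auto intro!: derivative_eq_intros d0 d1 simp: field_simps power2_eq_square)
  qed simp
  then have "integral {0..2*pi} (\<lambda>t. f t * cos (v * t) + f2 t * cos (v * t) / v^2) = 0"
    using p1 by (simp add: s2 c2p integral_unique)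
  then have e1: "integral {0..2*pi} (\<lambda>t. f t * cos (v * t)) = - integral {0..2*pi} (\<lambda>t. f2 t * cos (v * t)) / v^2"
    using integral_add[OF i1(1) i1(3)] by simp
  show "\<bar>integral {0..2*pi} (\<lambda>t. f t * cos (real n * t))\<bar> \<le> 2*pi*B / (real n)^2"
    using iI2c v unfolding e1[unfolded v_def] v_def by (simp add: divide_right_mono abs_div mult.commute)
  have "((\<lambda>t. f t * sin (v * t) + f2 t * sin (v * t) / v^2) has_integral
     ((- f (2*pi) * cos (v * (2*pi)) / v + f1 (2*pi) * sin (v * (2*pi)) / v^2) - (- f 0 * cos (v * 0) / v + f1 0 * sin (v * 0) / v^2))) {0..2*pi}"
  proof (rule ftc_real)
    fix x
    show "((\<lambda>t. - f t * cos (v * t) / v + f1 t * sin (v * t) / v^2) has_real_derivative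
      f x * sin (v * x) + f2 x * sin (v * x) / v^2) (at x)"
      using v by (auto intro!: derivative_eq_intros d0 d1 simp: field_simps power2_eq_square)
  qed simp
  then have "integral {0..2*pi} (\<lambda>t. f t * sin (v * t) + f2 t * sin (v * t) / v^2) = 0"
    using p0 by (simp add: s2 c2p integral_unique)
  then have e2: "integral {0..2*pi} (\<lambda>t. f t * sin (v * t)) = - integral {0..2*pi} (\<lambda>t. f2 t * sin (v * t)) / v^2"
    using integral_add[OF i1(2) i1(4)] by simp
  show "\<bar>integral {0..2*pi} (\<lambda>t. f t * sin (real n * t))\<bar> \<le> 2*pi*B / (real n)^2"
    using iI2s v unfolding e2[unfolded v_def] v_def by (simp add: divide_right_mono abs_div mult.commute)
qed

definition fterm :: "(real \<Rightarrow> real) \<Rightarrow> nat \<Rightarrow> real \<Rightarrow> real" where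
  "fterm h n t = fourier_a h n * cos (real n * t) + fourier_b h n * sin (real n * t)"

lemma per_int:
  fixes G :: "real \<Rightarrow> real"
  assumes p: "\<And>s. G (s + 2*pi) = G s"
  shows "G (s + 2*pi * of_int k) = G s"
proof -
  have nat: "G (s + 2*pi*real m) = G s" for s m
  proof (induction m)
    case 0 then show ?case by simp
  next
    case (Suc m)
    have "G (s + 2*pi*real (Suc m)) = G ((s + 2*pi*real m) + 2*pi)" by (simp add: algebra_simps)
    also have "\<dots> = G s" using p Suc by simp
    finally show ?case .
  qed
  show ?thesis
  proof (cases "k \<ge> 0")
    case True
    then obtain m where "k = int m" using nonneg_eq_int by blast
    then show ?thesis using nat by simp
  next
    case False
    then obtain m where m: "k = - int m" by (metis nonpos_int_cases not_le order.strict_iff_not)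
    have "G s = G ((s - 2*pi*real m) + 2*pi*real m)" by simp
    also have "\<dots> = G (s - 2*pi*real m)" by (rule nat)
    finally show ?thesis using m by simp
  qed
qed

lemma periodic_zero:
  fixes G :: "real \<Rightarrow> real"
  assumes p: "\<And>s. G (s + 2*pi) = G s" and z: "\<And>t. t \<in> {0..2*pi} \<Longrightarrow> G t = 0"
  shows "G t = 0"
proof -
  define k where "k = \<lfloor>t / (2*pi)\<rfloor>"
  have k1: "of_int k \<le> t / (2*pi)" "t / (2*pi) < of_int k + 1" unfolding k_def by linarith+
  have pp: "2*pi > 0" by simp
  have "2*pi * of_int k \<le> t" using k1(1) pp by (simp add: field_simps)
  moreover have "t < 2*pi * of_int k + 2*pi" using k1(2) pp by (simp add: field_simps)
  ultimately have "t - 2*pi * of_int k \<in> {0..2*pi}" by simp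
  then have "G (t - 2*pi * of_int k) = 0" by (rule z)
  moreover have "G ((t - 2*pi * of_int k) + 2*pi * of_int k) = G (t - 2*pi * of_int k)" by (rule per_int[of G, OF p])
  ultimately show ?thesis by simp
qed

lemma series_integral:
  fixes F :: "nat \<Rightarrow> real \<Rightarrow> real"
  assumes s: "\<And>t. (\<lambda>n. F n t) sums S t" and b: "\<And>n t. \<bar>F n t\<bar> \<le> M n" and sm: "summable M"
    and c: "\<And>n. continuous_on UNIV (F n)" and cS: "continuous_on UNIV S"
    and cw: "continuous_on UNIV w" and w: "\<And>t. \<bar>w t\<bar> \<le> 1"
  shows "(\<lambda>N. \<Sum>i<N. integral {0..2*pi} (\<lambda>t. F i t * w t)) \<longlonglongrightarrow> integral {0..2*pi} (\<lambda>t. S t * w t)"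
proof -
  have M0: "M n \<ge> 0" for n using b[of n 0] by linarith
  have e: "(\<Sum>i<N. integral {0..2*pi} (\<lambda>t. F i t * w t)) = integral {0..2*pi} (\<lambda>t. (\<Sum>i<N. F i t) * w t)" for N
  proof -
    have "integral {0..2*pi} (\<lambda>t. \<Sum>i<N. F i t * w t) = (\<Sum>i<N. integral {0..2*pi} (\<lambda>t. F i t * w t))"
      by (rule integral_sum) (auto intro!: intg_cont continuous_intros c cw)
    then show ?thesis by (simp add: sum_distrib_right)
  qed
  have "(\<lambda>N. integral {0..2*pi} (\<lambda>t. (\<Sum>i<N. F i t) * w t)) \<longlonglongrightarrow> integral {0..2*pi} (\<lambda>t. S t * w t)"
  proof (rule dominated_convergence(2)[where h="\<lambda>t. suminf M"])
    show "(\<lambda>t. (\<Sum>i<N. F i t) * w t) integrable_on {0..2*pi}" for N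
      by (intro intg_cont continuous_intros c cw)
    show "(\<lambda>t. suminf M) integrable_on {0..2*pi}" by (rule intg_cont) simp
    fix N t
    have "\<bar>\<Sum>i<N. F i t\<bar> \<le> (\<Sum>i<N. M i)"
      by (rule order_trans[OF sum_abs]) (rule sum_mono, rule b)
    also have "\<dots> \<le> suminf M" by (rule sum_le_suminf[OF sm]) (auto simp: M0)
    finally have "\<bar>\<Sum>i<N. F i t\<bar> \<le> suminf M" .
    then show "norm ((\<Sum>i<N. F i t) * w t) \<le> suminf M"
      unfolding real_norm_def abs_mult
      by (rule order_trans[OF mult_left_le[OF w abs_ge_zero]])
  next
    fix t
    show "(\<lambda>N. (\<Sum>i<N. F i t) * w t) \<longlonglongrightarrow> S t * w t"
      using s[of t] unfolding sums_def by (intro tendsto_mult_right)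
  qed
  then show ?thesis unfolding e .
qed

lemma fterm_cos_int:
  "integral {0..2*pi} (\<lambda>t. fterm h i t * cos (real m * t)) =
     (if i = m then (if m = 0 then 2*pi else pi) * fourier_a h m else 0)"
proof -
  have "((\<lambda>t. fourier_a h i * (cos (real i * t) * cos (real m * t)) + fourier_b h i * (sin (real i * t) * cos (real m * t))) has_integral
     (fourier_a h i * (if i = m then (if i = 0 then 2*pi else pi) else 0) + fourier_b h i * 0)) {0..2*pi}"
    by (intro has_integral_add has_integral_mult_right orth_cc orth_sc)
  then have "integral {0..2*pi} (\<lambda>t. fterm h i t * cos (real m * t)) = fourier_a h i * (if i = m then (if i = 0 then 2*pi else pi) else 0)"
    unfolding fterm_def by (simp add: algebra_simps integral_unique)
  then show ?thesis by auto
qed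

lemma fterm_sin_int:
  "integral {0..2*pi} (\<lambda>t. fterm h i t * sin (real m * t)) =
     (if i = m \<and> m \<noteq> 0 then pi * fourier_b h m else 0)"
proof -
  have "((\<lambda>t. fourier_a h i * (sin (real m * t) * cos (real i * t)) + fourier_b h i * (sin (real i * t) * sin (real m * t))) has_integral
     (fourier_a h i * 0 + fourier_b h i * (if i = m \<and> i \<noteq> 0 then pi else 0))) {0..2*pi}"
    by (intro has_integral_add has_integral_mult_right orth_ss orth_sc)
  then have "integral {0..2*pi} (\<lambda>t. fterm h i t * sin (real m * t)) = fourier_b h i * (if i = m \<and> i \<noteq> 0 then pi else 0)"
    unfolding fterm_def by (simp add: algebra_simps integral_unique)
  then show ?thesis by auto
qed

lemma fourier_conv:
  fixes h :: "real \<Rightarrow> real"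
  assumes sm: "smooth_fun h" and per: "periodic_2pi h"
  shows "(\<lambda>n. fterm h n t) sums h t"
proof -
  have dh: "h differentiable at x" for x using sm[unfolded smooth_fun_def, rule_format, of 0 x] by simp
  have dh1: "deriv h differentiable at x" for x using sm[unfolded smooth_fun_def, rule_format, of 1 x] by simp
  have dh2: "deriv (deriv h) differentiable at x" for x
    using sm[unfolded smooth_fun_def, rule_format, of 2 x] by (simp add: numeral_2_eq_2)
  have d0: "(h has_real_derivative deriv h x) (at x)" for x using dh by (simp add: DERIV_deriv_iff_real_differentiable)
  have d1: "(deriv h has_real_derivative deriv (deriv h) x) (at x)" for x using dh1 by (simp add: DERIV_deriv_iff_real_differentiable)
  have c2: "continuous_on UNIV (deriv (deriv h))"
    using dh2 by (meson continuous_at_imp_continuous_on differentiable_imp_continuous_within)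
  have ch: "continuous_on UNIV h"
    using dh by (meson continuous_at_imp_continuous_on differentiable_imp_continuous_within)
  have p0: "h (s + 2*pi) = h s" for s using per unfolding periodic_2pi_def by blast
  have p1: "deriv h (s + 2*pi) = deriv h s" for s by (rule deriv_periodic[OF dh p0])
  obtain B where B: "\<And>x. x \<in> {0..2*pi} \<Longrightarrow> \<bar>deriv (deriv h) x\<bar> \<le> B"
  proof -
    have "bounded (deriv (deriv h) ` {0..2*pi})"
      by (rule compact_imp_bounded[OF compact_continuous_image[OF continuous_on_subset[OF c2] compact_Icc]]) simp
    then obtain a where "\<forall>y\<in>deriv (deriv h) ` {0..2*pi}. norm y \<le> a" unfolding bounded_iff by blast
    then show ?thesis by (intro that[of a]) auto
  qed
  have B0: "B \<ge> 0" using B[of 0] by simp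
  have dec: "\<bar>fourier_a h n\<bar> \<le> 2*B / (real n)^2 \<and> \<bar>fourier_b h n\<bar> \<le> 2*B / (real n)^2" if n: "n \<ge> 1" for n
  proof -
    have pi0: "0 \<le> pi" using pi_gt_zero by linarith
    note cd = coeff_decay[OF d0 d1 c2 p0[of 0, simplified] p1[of 0, simplified] B n]
    have "\<bar>fourier_a h n\<bar> = \<bar>integral {0..2*pi} (\<lambda>t. h t * cos (real n * t))\<bar> / pi"
      using n by (simp add: fourier_a_def abs_mult)
    also have "\<dots> \<le> (2*pi*B / (real n)^2) / pi" by (rule divide_right_mono[OF cd(1) pi0])
    also have "\<dots> = 2*B / (real n)^2" by simp
    finally have a: "\<bar>fourier_a h n\<bar> \<le> 2*B / (real n)^2" .
    have "\<bar>fourier_b h n\<bar> = \<bar>integral {0..2*pi} (\<lambda>t. h t * sin (real n * t))\<bar> / pi"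
      by (simp add: fourier_b_def abs_mult)
    also have "\<dots> \<le> (2*pi*B / (real n)^2) / pi" by (rule divide_right_mono[OF cd(2) pi0])
    also have "\<dots> = 2*B / (real n)^2" by simp
    finally show ?thesis using a by simp
  qed
  define M where "M n = \<bar>fourier_a h n\<bar> + \<bar>fourier_b h n\<bar>" for n
  have smM: "summable M"
  proof (rule summable_comparison_test_ev)
    show "summable (\<lambda>n. 4*B * inverse (real n ^ 2))"
      by (intro summable_mult inverse_power_summable) simp
    have "norm (M n) \<le> 4*B * inverse (real n ^ 2)" if "n \<ge> 1" for n
      using dec[OF that] by (simp add: M_def divide_inverse)
    then show "\<forall>\<^sub>F n in sequentially. norm (M n) \<le> 4*B * inverse (real n ^ 2)"
      unfolding eventually_sequentially by blast
  qed
  have bM: "\<bar>fterm h n t\<bar> \<le> M n" for n t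
  proof -
    have "\<bar>fterm h n t\<bar> \<le> \<bar>fourier_a h n\<bar> * \<bar>cos (real n * t)\<bar> + \<bar>fourier_b h n\<bar> * \<bar>sin (real n * t)\<bar>"
      unfolding fterm_def abs_mult[symmetric] by (rule abs_triangle_ineq)
    also have "\<dots> \<le> \<bar>fourier_a h n\<bar> * 1 + \<bar>fourier_b h n\<bar> * 1"
      by (intro add_mono mult_left_mono abs_cos_le_one abs_sin_le_one abs_ge_zero)
    finally show ?thesis by (simp add: M_def)
  qed
  define S where "S t = (\<Sum>n. fterm h n t)" for t
  have sS: "(\<lambda>n. fterm h n t) sums S t" for t
    unfolding S_def by (rule summable_sums, rule summable_comparison_test[OF _ smM]) (use bM in auto)
  have cf: "continuous_on UNIV (fterm h n)" for n
    unfolding fterm_def by (intro continuous_intros)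
  have cS: "continuous_on UNIV S"
  proof (rule uniform_limit_theorem)
    show "uniform_limit UNIV (\<lambda>N x. \<Sum>i<N. fterm h i x) S sequentially"
      unfolding S_def by (rule Weierstrass_m_test[OF _ smM]) (use bM in auto)
    show "\<forall>\<^sub>F N in sequentially. continuous_on UNIV (\<lambda>x. \<Sum>i<N. fterm h i x)"
      by (intro always_eventually allI continuous_on_sum cf)
  qed simp
  have icos: "integral {0..2*pi} (\<lambda>t. S t * cos (real m * t)) = integral {0..2*pi} (\<lambda>t. h t * cos (real m * t))" for m
  proof -
    have L: "(\<lambda>N. \<Sum>i<N. integral {0..2*pi} (\<lambda>t. fterm h i t * cos (real m * t))) \<longlonglongrightarrow> integral {0..2*pi} (\<lambda>t. S t * cos (real m * t))"
      by (rule series_integral[OF sS bM smM cf cS]) (auto intro!: continuous_intros)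
    have V: "(if m = 0 then 2*pi else pi) * fourier_a h m = integral {0..2*pi} (\<lambda>t. h t * cos (real m * t))"
      by (simp add: fourier_a_def)
    have "\<forall>\<^sub>F N in sequentially. (\<Sum>i<N. integral {0..2*pi} (\<lambda>t. fterm h i t * cos (real m * t))) = integral {0..2*pi} (\<lambda>t. h t * cos (real m * t))"
      unfolding eventually_sequentially
      by (rule exI[of _ "Suc m"]) (auto simp: fterm_cos_int V[symmetric])
    then have "(\<lambda>N. \<Sum>i<N. integral {0..2*pi} (\<lambda>t. fterm h i t * cos (real m * t))) \<longlonglongrightarrow> integral {0..2*pi} (\<lambda>t. h t * cos (real m * t))"
      by (rule tendsto_eventually)
    then show ?thesis using L LIMSEQ_unique by blast
  qed
  have isin: "integral {0..2*pi} (\<lambda>t. S t * sin (real m * t)) = integral {0..2*pi} (\<lambda>t. h t * sin (real m * t))" for m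
  proof -
    have L: "(\<lambda>N. \<Sum>i<N. integral {0..2*pi} (\<lambda>t. fterm h i t * sin (real m * t))) \<longlonglongrightarrow> integral {0..2*pi} (\<lambda>t. S t * sin (real m * t))"
      by (rule series_integral[OF sS bM smM cf cS]) (auto intro!: continuous_intros)
    have V: "(if m \<noteq> 0 then pi * fourier_b h m else 0) = integral {0..2*pi} (\<lambda>t. h t * sin (real m * t))"
      by (simp add: fourier_b_def)
    have "\<forall>\<^sub>F N in sequentially. (\<Sum>i<N. integral {0..2*pi} (\<lambda>t. fterm h i t * sin (real m * t))) = integral {0..2*pi} (\<lambda>t. h t * sin (real m * t))"
      unfolding eventually_sequentially
      by (rule exI[of _ "Suc m"]) (auto simp: fterm_sin_int V[symmetric])
    then have "(\<lambda>N. \<Sum>i<N. integral {0..2*pi} (\<lambda>t. fterm h i t * sin (real m * t))) \<longlonglongrightarrow> integral {0..2*pi} (\<lambda>t. h t * sin (real m * t))"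
      by (rule tendsto_eventually)
    then show ?thesis using L LIMSEQ_unique by blast
  qed
  have fper: "fterm h n (s + 2*pi) = fterm h n s" for n s
  proof -
    have "cos (real n * (s + 2*pi)) = cos (real n * s)" "sin (real n * (s + 2*pi)) = sin (real n * s)"
      using sin_int_2pi[of "int n"] cos_int_2pi[of "int n"] by (simp_all add: distrib_left cos_add sin_add)
    then show ?thesis unfolding fterm_def by simp
  qed
  have Sper: "S (s + 2*pi) = S s" for s unfolding S_def fper ..
  define G where "G t = h t - S t" for t
  have Gper: "G (s + 2*pi) = G s" for s unfolding G_def using p0 Sper by simp
  have cG: "continuous_on UNIV G" unfolding G_def by (intro continuous_intros ch cS)
  have "G t = 0" if "t \<in> {0..2*pi}" for t
  proof (rule unique_fourier[OF cG _ _ _ that])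
    show "G (2*pi) = G 0" using Gper[of 0] by simp
    fix n :: nat
    have "integral {0..2*pi} (\<lambda>t. G t * cos (real n * t)) =
       integral {0..2*pi} (\<lambda>t. h t * cos (real n * t)) - integral {0..2*pi} (\<lambda>t. S t * cos (real n * t))"
      unfolding G_def left_diff_distrib
      by (rule integral_diff) (auto intro!: intg_cont continuous_intros ch cS)
    then show "integral {0..2*pi} (\<lambda>t. G t * cos (real n * t)) = 0" using icos by simp
    have "integral {0..2*pi} (\<lambda>t. G t * sin (real n * t)) =
       integral {0..2*pi} (\<lambda>t. h t * sin (real n * t)) - integral {0..2*pi} (\<lambda>t. S t * sin (real n * t))"
      unfolding G_def left_diff_distrib
      by (rule integral_diff) (auto intro!: intg_cont continuous_intros ch cS)
    then show "integral {0..2*pi} (\<lambda>t. G t * sin (real n * t)) = 0" using isin by simp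
  qed
  then have "G t = 0" by (rule periodic_zero[of G, OF Gper])
  then have "h t = S t" unfolding G_def by simp
  then show ?thesis using sS by simp
qed

lemma root_sum:
  assumes k: "k > 0"
  shows "(\<Sum>j<k. cis (real n * (x + 2*pi*real j/real k))) = (if k dvd n then of_nat k * cis (real n * x) else 0)"
proof -
  define w where "w = cis (2*pi*real n/real k)"
  have e: "cis (real n * (x + 2*pi*real j/real k)) = cis (real n * x) * w ^ j" for j
  proof -
    have "real n * (x + 2*pi*real j/real k) = real n * x + real j * (2*pi*real n/real k)" by (simp add: algebra_simps)
    then show ?thesis by (simp only: w_def Complex.DeMoivre cis_mult)
  qed
  have s: "(\<Sum>j<k. cis (real n * (x + 2*pi*real j/real k))) = cis (real n * x) * (\<Sum>j<k. w ^ j)"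
    unfolding e by (simp add: sum_distrib_left)
  show ?thesis
  proof (cases "k dvd n")
    case True
    then obtain q where q: "n = k * q" by blast
    have qq: "2*pi*real (k*q)/real k = 2*pi*real q" using k by simp
    have "w = cis (2*pi*real q)" unfolding w_def q qq ..
    also have "\<dots> = 1" by (rule cis_multiple_2pi) simp
    finally show ?thesis using True s by simp
  next
    case False
    have w1: "w \<noteq> 1"
    proof
      assume "w = 1"
      then have "cos (2*pi*real n/real k) = 1" unfolding w_def by (metis cis.sel(1) one_complex.sel(1))
      then obtain m :: int where m: "2*pi*real n/real k = of_int m * 2 * pi" using cos_one_2pi_int by blast
      then have "real n = of_int m * real k" using k by (simp add: field_simps)
      then have "int n = m * int k" by (metis of_int_eq_iff of_int_mult of_int_of_nat_eq)
      then have "int k dvd int n" by simp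
      then show False using False by simp
    qed
    have wk: "w ^ k = 1" unfolding w_def Complex.DeMoivre using k by simp
    have "(\<Sum>j<k. w ^ j) = 0" using sum_gp_strict[of w k] w1 wk by simp
    then show ?thesis using False s by simp
  qed
qed

lemma root_cos_sin:
  assumes k: "k > 0"
  shows "(\<Sum>j<k. cos (real n * (x + 2*pi*real j/real k))) = (if k dvd n then real k * cos (real n * x) else 0)"
    "(\<Sum>j<k. sin (real n * (x + 2*pi*real j/real k))) = (if k dvd n then real k * sin (real n * x) else 0)"
proof -
  have "Re (\<Sum>j<k. cis (real n * (x + 2*pi*real j/real k))) = Re (if k dvd n then of_nat k * cis (real n * x) else 0)"
    using root_sum[OF k] by simp
  then show "(\<Sum>j<k. cos (real n * (x + 2*pi*real j/real k))) = (if k dvd n then real k * cos (real n * x) else 0)"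
    by (simp split: if_splits)
  have "Im (\<Sum>j<k. cis (real n * (x + 2*pi*real j/real k))) = Im (if k dvd n then of_nat k * cis (real n * x) else 0)"
    using root_sum[OF k] by simp
  then show "(\<Sum>j<k. sin (real n * (x + 2*pi*real j/real k))) = (if k dvd n then real k * sin (real n * x) else 0)"
    by (simp split: if_splits)
qed

lemma rot:
  "cos th *\<^sub>R (a *\<^sub>R uvec (s+th) + b *\<^sub>R uvec' (s+th)) - sin th *\<^sub>R perp (a *\<^sub>R uvec (s+th) + b *\<^sub>R uvec' (s+th))
   = a *\<^sub>R uvec s + b *\<^sub>R uvec' s"
proof -
  have c: "cos th ^ 2 + sin th ^ 2 = 1" by simp
  show ?thesis
    unfolding uvec_def uvec'_def perp_def prod_eq_iff
    apply (simp add: cos_add sin_add)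
    using c by algebra
qed

theorem proposition3p7:
  fixes h :: "real \<Rightarrow> real" and k :: nat
  assumes "smooth_fun h" and "periodic_2pi h" and "k > 2"
  defines "hk \<equiv> (\<lambda>s. (1 / real k) * (\<Sum>j = 0..<k. h (s + 2 * pi * real j / real k))
                        - 1 / 2 * avg_width h)"
  shows "(\<forall>s. ops h k s = hedgehog hk s)
       \<and> (\<forall>s. (\<lambda>n. if k dvd n \<and> n > 1
                    then fourier_a h n * cos (real n * s) + fourier_b h n * sin (real n * s)
                    else 0) sums hk s)"
proof
  have k0: "k > 0" using assms(3) by simp
  have dh: "h differentiable at x" for x using assms(1)[unfolded smooth_fun_def, rule_format, of 0 x] by simp
  have d0: "(h has_real_derivative deriv h x) (at x)" for x using dh by (simp add: DERIV_deriv_iff_real_differentiable)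
  have p0: "h (s + 2*pi) = h s" for s using assms(2) unfolding periodic_2pi_def by blast
  have p1: "deriv h (s + 2*pi) = deriv h s" for s by (rule deriv_periodic[OF dh p0])
  show "\<forall>s. ops h k s = hedgehog hk s"
  proof
    fix s
    define th where "th j = 2 * pi * real j / real k" for j
    have dk: "(hk has_real_derivative (1 / real k) * (\<Sum>j = 0..<k. deriv h (s + th j))) (at s)"
    proof -
      have "((\<lambda>s. \<Sum>j = 0..<k. h (s + th j)) has_real_derivative (\<Sum>j = 0..<k. deriv h (s + th j))) (at s)"
        by (rule DERIV_sum) (use d0 DERIV_shift in blast)
      then have "((\<lambda>s. (1 / real k) * (\<Sum>j = 0..<k. h (s + th j)) - 1 / 2 * avg_width h) has_real_derivative
         (1 / real k) * (\<Sum>j = 0..<k. deriv h (s + th j)) - 0) (at s)"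
        by (intro DERIV_diff DERIV_cmult DERIV_const)
      then show ?thesis unfolding hk_def th_def by simp
    qed
    then have dks: "deriv hk s = (1 / real k) * (\<Sum>j = 0..<k. deriv h (s + th j))" by (rule DERIV_imp_deriv)
    define F where "F j = h (s + th j) *\<^sub>R uvec s + deriv h (s + th j) *\<^sub>R uvec' s" for j
    have summ: "cos (th j) *\<^sub>R hedgehog h (s + th j) - sin (th j) *\<^sub>R perp (hedgehog h (s + th j)) = F j" for j
      unfolding hedgehog_def F_def by (rule rot)
    have Fk: "F k = F 0" unfolding F_def th_def using k0 p0 p1 by simp
    have "(\<Sum>j = 1..k. F j) = (\<Sum>j<k. F (Suc j))" by (simp add: sum.atLeast1_atMost_eq)
    also have "\<dots> = (\<Sum>j<k. F j)"
    proof -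
      have "(\<Sum>j<Suc k. F j) = F 0 + (\<Sum>j<k. F (Suc j))" by (rule sum.lessThan_Suc_shift)
      moreover have "(\<Sum>j<Suc k. F j) = (\<Sum>j<k. F j) + F k" by simp
      ultimately show ?thesis using Fk by (simp add: algebra_simps)
    qed
    finally have s1: "(\<Sum>j = 1..k. F j) = (\<Sum>j<k. F j)" .
    have s2: "(\<Sum>j<k. F j) = (\<Sum>j = 0..<k. h (s + th j)) *\<^sub>R uvec s + (\<Sum>j = 0..<k. deriv h (s + th j)) *\<^sub>R uvec' s"
      unfolding F_def by (simp add: sum.distrib scaleR_sum_left atLeast0LessThan)
    have "ops h k s = (1 / real k) *\<^sub>R (\<Sum>j = 1..k. F j) - (1 / 2 * avg_width h) *\<^sub>R uvec s"
      unfolding ops_def summ[unfolded th_def, symmetric] th_def ..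
    also have "\<dots> = hk s *\<^sub>R uvec s + deriv hk s *\<^sub>R uvec' s"
      unfolding s1 s2 dks by (simp add: hk_def th_def algebra_simps)
    finally show "ops h k s = hedgehog hk s" unfolding hedgehog_def .
  qed
next
  show "\<forall>s. (\<lambda>n. if k dvd n \<and> n > 1
                    then fourier_a h n * cos (real n * s) + fourier_b h n * sin (real n * s)
                    else 0) sums hk s"
  proof
    fix s
    have k0: "k > 0" using assms(3) by simp
    define f where "f n = (1 / real k) * (\<Sum>j = 0..<k. fterm h n (s + 2 * pi * real j / real k))" for n
    have fs: "f sums ((1 / real k) * (\<Sum>j = 0..<k. h (s + 2 * pi * real j / real k)))"
      unfolding f_def by (intro sums_mult sums_sum fourier_conv assms(1,2))
    have fe: "f n = (if k dvd n then fterm h n s else 0)" for n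
    proof -
      have "(\<Sum>j = 0..<k. fterm h n (s + 2 * pi * real j / real k)) =
        fourier_a h n * (\<Sum>j<k. cos (real n * (s + 2 * pi * real j / real k))) +
        fourier_b h n * (\<Sum>j<k. sin (real n * (s + 2 * pi * real j / real k)))"
        unfolding fterm_def by (simp add: sum.distrib sum_distrib_left atLeast0LessThan)
      then show ?thesis unfolding f_def root_cos_sin[OF k0] fterm_def using k0 by (simp add: field_simps)
    qed
    have f0: "f 0 = 1 / 2 * avg_width h"
      unfolding fe fterm_def avg_width_def fourier_a_def by simp
    have "(\<lambda>n. f n - (if n = 0 then f n else 0)) sums ((1 / real k) * (\<Sum>j = 0..<k. h (s + 2 * pi * real j / real k)) - f 0)"
      by (intro sums_diff fs sums_single)
    moreover have "(\<lambda>n. f n - (if n = 0 then f n else 0)) = (\<lambda>n. if k dvd n \<and> n > 1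
                    then fourier_a h n * cos (real n * s) + fourier_b h n * sin (real n * s) else 0)"
    proof
      fix n
      show "f n - (if n = 0 then f n else 0) = (if k dvd n \<and> n > 1
                    then fourier_a h n * cos (real n * s) + fourier_b h n * sin (real n * s) else 0)"
      proof (cases "n = 0")
        case True then show ?thesis by simp
      next
        case False
        show ?thesis
        proof (cases "n = 1")
          case True
          then have "\<not> k dvd n" using assms(3) by auto
          then show ?thesis using True unfolding fe by simp
        next
          case False
          then have "n > 1" using \<open>n \<noteq> 0\<close> by simp
          then show ?thesis unfolding fe fterm_def by simp
        qed
      qed
    qed
    ultimately show "(\<lambda>n. if k dvd n \<and> n > 1
                    then fourier_a h n * cos (real n * s) + fourier_b h n * sin (real n * s)
                    else 0) sums hk s" unfolding hk_def f0 by simp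
  qed
qed

end
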